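(* Every nilpotent right loop is solvable.
   Context: A right loop is a set $S$ with binary operation $\circ$ and two-sided identity $1$ such that each equation $X\circ a=b$ has a unique solution. A congruence on $S$ is an equivalence relation which is a right subloop of $S\times S$ (componentwise); an invariant right subloop is the class $T$ of $1$ under a congruence, and $S/T=\{T\circ x\}$ with $(T\circ x)\circ(T\circ y)=T\circ(x\circ y)$. Centralizing: for congruences $\beta,\gamma$ on $S$, $\gamma$ centralizes $\beta$ if there is a congruence $(\gamma|\beta)$ on the right loop $\beta\subseteq S\times S$ such that: (i) $(x,y)(\gamma|\beta)(u,v)\Rightarrow x\gamma u$; (ii) for each $(x,y)\in\beta$ the map $(u,v)\mapsto u$ from the $(\gamma|\beta)$-class of $(x,y)$ to the $\gamma$-class of $x$ is a bijection; (iii) $(x,y)\in\gamma\Rightarrow (x,x)(\gamma|\beta)(y,y)$; (iv) $(x,y)(\gamma|\beta)(u,v)\Rightarrow(y,x)(\gamma|\beta)(v,u)$; (v) $(x,y)(\gamma|\beta)(u,v)$ and $(y,z)(\gamma|\beta)(v,w)$ imply $(x,z)(\gamma|\beta)(u,w)$. A congruence centralized by $S\times S$ is central; there is a unique maximal central congruence $\zeta(S)$, and the center $\mathcal Z(S)$ is the $\zeta(S)$-class of $1$ (it is an abelian group under $\circ$). $S$ is nilpotent if the series $\mathcal Z_0=\{1\}$, $\mathcal Z_1=\mathcal Z(S)$, $\mathcal Z_{i+1}/\mathcal Z_i=\mathcal Z(S/\mathcal Z_i)$ reaches $\mathcal Z_n=S$ for some $n$. $S^{(1)}$ is the smallest invariant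 right subloop $N$ with $S/N$ an abelian group; $S^{(n)}=(S^{(n-1)})^{(1)}$; $S$ is solvable if $S^{(n)}=\{1\}$ for some $n$. *)

theory Defs
  imports "HOL-Algebra.Group"
begin

definition rl_right_loop :: "'a set \<Rightarrow> ('a \<Rightarrow> 'a \<Rightarrow> 'a) \<Rightarrow> 'a \<Rightarrow> bool" where
  "rl_right_loop S op e \<longleftrightarrow>
     e \<in> S \<and> (\<forall>x\<in>S. \<forall>y\<in>S. op x y \<in> S) \<and>
     (\<forall>x\<in>S. op e x = x \<and> op x e = x) \<and>
     (\<forall>a\<in>S. \<forall>b\<in>S. \<exists>!x. x \<in> S \<and> op x a = b)"

definition rl_pop :: "('a \<Rightarrow> 'a \<Rightarrow> 'a) \<Rightarrow> ('a \<times> 'a) \<Rightarrow> ('a \<times> 'a) \<Rightarrow> ('a \<times> 'a)" where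
  "rl_pop op p q = (op (fst p) (fst q), op (snd p) (snd q))"

definition rl_congruence :: "'a set \<Rightarrow> ('a \<Rightarrow> 'a \<Rightarrow> 'a) \<Rightarrow> 'a \<Rightarrow> 'a rel \<Rightarrow> bool" where
  "rl_congruence S op e R \<longleftrightarrow>
     equiv S R \<and> R \<subseteq> S \<times> S \<and> rl_right_loop R (rl_pop op) (e, e)"

definition rl_centralizes :: "'a set \<Rightarrow> ('a \<Rightarrow> 'a \<Rightarrow> 'a) \<Rightarrow> 'a \<Rightarrow> 'a rel \<Rightarrow> 'a rel \<Rightarrow> bool" where
  "rl_centralizes S op e \<gamma> \<beta> \<longleftrightarrow>
     rl_congruence S op e \<beta> \<and> rl_congruence S op e \<gamma> \<and>
     (\<exists>C :: ('a \<times> 'a) rel.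
        rl_congruence \<beta> (rl_pop op) (e, e) C \<and>
        (\<forall>x y u v. ((x, y), (u, v)) \<in> C \<longrightarrow> (x, u) \<in> \<gamma>) \<and>
        (\<forall>x y. (x, y) \<in> \<beta> \<longrightarrow> bij_betw fst (C `` {(x, y)}) (\<gamma> `` {x})) \<and>
        (\<forall>x y. (x, y) \<in> \<gamma> \<longrightarrow> ((x, x), (y, y)) \<in> C) \<and>
        (\<forall>x y u v. ((x, y), (u, v)) \<in> C \<longrightarrow> ((y, x), (v, u)) \<in> C) \<and>
        (\<forall>x y z u v w. ((x, y), (u, v)) \<in> C \<and> ((y, z), (v, w)) \<in> C
            \<longrightarrow> ((x, z), (u, w)) \<in> C))"

definition rl_central :: "'a set \<Rightarrow> ('a \<Rightarrow> 'a \<Rightarrow> 'a) \<Rightarrow> 'a \<Rightarrow> 'a rel \<Rightarrow> bool" where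
  "rl_central S op e \<beta> \<longleftrightarrow> rl_centralizes S op e (S \<times> S) \<beta>"

definition rl_zeta :: "'a set \<Rightarrow> ('a \<Rightarrow> 'a \<Rightarrow> 'a) \<Rightarrow> 'a \<Rightarrow> 'a rel" where
  "rl_zeta S op e = (THE \<beta>. rl_central S op e \<beta> \<and> (\<forall>\<beta>'. rl_central S op e \<beta>' \<longrightarrow> \<beta>' \<subseteq> \<beta>))"

definition rl_center :: "'a set \<Rightarrow> ('a \<Rightarrow> 'a \<Rightarrow> 'a) \<Rightarrow> 'a \<Rightarrow> 'a set" where
  "rl_center S op e = rl_zeta S op e `` {e}"

definition rl_invariant :: "'a set \<Rightarrow> ('a \<Rightarrow> 'a \<Rightarrow> 'a) \<Rightarrow> 'a \<Rightarrow> 'a set \<Rightarrow> bool" where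
  "rl_invariant S op e T \<longleftrightarrow> (\<exists>R. rl_congruence S op e R \<and> T = R `` {e})"

definition rl_coset :: "('a \<Rightarrow> 'a \<Rightarrow> 'a) \<Rightarrow> 'a set \<Rightarrow> 'a \<Rightarrow> 'a set" where
  "rl_coset op T x = (\<lambda>t. op t x) ` T"

text \<open>To keep the quotient S/T = {T o x} inside the same type, each coset T o x
is represented by a chosen representative element of S lying in it;
the quotient operation is (T o x)(T o y) = T o (x o y).\<close>
definition rl_qrep :: "'a set \<Rightarrow> ('a \<Rightarrow> 'a \<Rightarrow> 'a) \<Rightarrow> 'a set \<Rightarrow> 'a \<Rightarrow> 'a" where
  "rl_qrep S op T x = (SOME y. y \<in> S \<and> rl_coset op T y = rl_coset op T x)"

definition rl_qcarrier :: "'a set \<Rightarrow> ('a \<Rightarrow> 'a \<Rightarrow> 'a) \<Rightarrow> 'a set \<Rightarrow> 'a set" where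
  "rl_qcarrier S op T = rl_qrep S op T ` S"

definition rl_qop :: "'a set \<Rightarrow> ('a \<Rightarrow> 'a \<Rightarrow> 'a) \<Rightarrow> 'a set \<Rightarrow> 'a \<Rightarrow> 'a \<Rightarrow> 'a" where
  "rl_qop S op T a b = rl_qrep S op T (op a b)"

text \<open>Z_0 = {1}; Z_{i+1} is the preimage in S of Z(S/Z_i).\<close>
fun rl_upper_center :: "'a set \<Rightarrow> ('a \<Rightarrow> 'a \<Rightarrow> 'a) \<Rightarrow> 'a \<Rightarrow> nat \<Rightarrow> 'a set" where
  "rl_upper_center S op e 0 = {e}"
| "rl_upper_center S op e (Suc i) =
     (let T = rl_upper_center S op e i in
      {x \<in> S. rl_qrep S op T x \<in>
              rl_center (rl_qcarrier S op T) (rl_qop S op T) (rl_qrep S op T e)})"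

definition rl_nilpotent :: "'a set \<Rightarrow> ('a \<Rightarrow> 'a \<Rightarrow> 'a) \<Rightarrow> 'a \<Rightarrow> bool" where
  "rl_nilpotent S op e \<longleftrightarrow> (\<exists>n. rl_upper_center S op e n = S)"

definition rl_quotient_abelian :: "'a set \<Rightarrow> ('a \<Rightarrow> 'a \<Rightarrow> 'a) \<Rightarrow> 'a \<Rightarrow> 'a set \<Rightarrow> bool" where
  "rl_quotient_abelian S op e N \<longleftrightarrow>
     comm_group \<lparr>carrier = rl_qcarrier S op N, mult = rl_qop S op N, one = rl_qrep S op N e\<rparr>"

definition rl_derived :: "'a set \<Rightarrow> ('a \<Rightarrow> 'a \<Rightarrow> 'a) \<Rightarrow> 'a \<Rightarrow> 'a set" where
  "rl_derived S op e = (THE N. rl_invariant S op e N \<and> rl_quotient_abelian S op e N \<and>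
       (\<forall>N'. rl_invariant S op e N' \<and> rl_quotient_abelian S op e N' \<longrightarrow> N \<subseteq> N'))"

fun rl_derived_series :: "'a set \<Rightarrow> ('a \<Rightarrow> 'a \<Rightarrow> 'a) \<Rightarrow> 'a \<Rightarrow> nat \<Rightarrow> 'a set" where
  "rl_derived_series S op e 0 = S"
| "rl_derived_series S op e (Suc n) = rl_derived (rl_derived_series S op e n) op e"

definition rl_solvable :: "'a set \<Rightarrow> ('a \<Rightarrow> 'a \<Rightarrow> 'a) \<Rightarrow> 'a \<Rightarrow> bool" where
  "rl_solvable S op e \<longleftrightarrow> (\<exists>n. rl_derived_series S op e n = {e})"

end

theory Submission
  imports Defs
begin

lemma rlD:
  assumes "rl_right_loop S op e"
  shows "e \<in> S" "\<And>x y. x \<in> S \<Longrightarrow> y \<in> S \<Longrightarrow> op x y \<in> S"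
    "\<And>x. x \<in> S \<Longrightarrow> op e x = x" "\<And>x. x \<in> S \<Longrightarrow> op x e = x"
    "\<And>a b. a \<in> S \<Longrightarrow> b \<in> S \<Longrightarrow> \<exists>!x. x \<in> S \<and> op x a = b"
  using assms unfolding rl_right_loop_def by auto

lemma rl_cancel:
  assumes "rl_right_loop S op e" "x \<in> S" "y \<in> S" "a \<in> S" "op x a = op y a"
  shows "x = y"
proof -
  have "op x a \<in> S" using rlD(2)[OF assms(1)] assms by auto
  then have "\<exists>!z. z \<in> S \<and> op z a = op x a" using rlD(5)[OF assms(1)] assms by auto
  then show ?thesis using assms by auto
qed

lemma rl_div:
  assumes "rl_right_loop S op e" "a \<in> S" "b \<in> S"
  obtains x where "x \<in> S" "op x a = b"
  using rlD(5)[OF assms(1) assms(2,3)] by auto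

section \<open>The nucleus-centre\<close>

definition rl_Z :: "'a set \<Rightarrow> ('a \<Rightarrow> 'a \<Rightarrow> 'a) \<Rightarrow> 'a set" where
  "rl_Z S op = {z \<in> S. \<forall>x\<in>S. \<forall>y\<in>S. op z x = op x z \<and> op (op z x) y = op z (op x y)
      \<and> op (op x z) y = op x (op z y) \<and> op (op x y) z = op x (op y z)}"

lemma rl_ZD:
  assumes "z \<in> rl_Z S op" "x \<in> S" "y \<in> S"
  shows "z \<in> S" "op z x = op x z" "op (op z x) y = op z (op x y)"
      "op (op x z) y = op x (op z y)" "op (op x y) z = op x (op y z)"
  using assms unfolding rl_Z_def mem_Collect_eq by blast+

lemma rl_Z_e:
  assumes "rl_right_loop S op e" shows "e \<in> rl_Z S op"
  using rlD[OF assms] unfolding rl_Z_def by auto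

lemma rl_Z_mult:
  assumes L: "rl_right_loop S op e" and z: "z \<in> rl_Z S op" and w: "w \<in> rl_Z S op"
  shows "op z w \<in> rl_Z S op"
proof -
  note cl = rlD(2)[OF L]
  have zS: "z \<in> S" and wS: "w \<in> S" using z w by (auto simp: rl_Z_def)
  have "op z w \<in> S" using cl zS wS by auto
  moreover
  { fix x y assume x: "x \<in> S" and y: "y \<in> S"
    note Zz = rl_ZD[OF z] and Zw = rl_ZD[OF w]
    have c: "op (op z w) x = op x (op z w)"
    proof -
      have "op (op z w) x = op z (op w x)" using Zz(3)[OF wS x] .
      also have "\<dots> = op z (op x w)" using Zw(2)[OF x y] by simp
      also have "\<dots> = op (op z x) w" using Zw(5)[OF zS x] by simp
      also have "\<dots> = op (op x z) w" using Zz(2)[OF x y] by simp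
      also have "\<dots> = op x (op z w)" using Zw(5)[OF x zS] .
      finally show ?thesis .
    qed
    have l: "op (op (op z w) x) y = op (op z w) (op x y)"
    proof -
      have "op (op (op z w) x) y = op (op z (op w x)) y" using Zz(3)[OF wS x] by simp
      also have "\<dots> = op z (op (op w x) y)" using Zz(3)[OF cl[OF wS x] y] .
      also have "\<dots> = op z (op w (op x y))" using Zw(3)[OF x y] by simp
      also have "\<dots> = op (op z w) (op x y)" using Zz(3)[OF wS cl[OF x y]] by simp
      finally show ?thesis .
    qed
    have m: "op (op x (op z w)) y = op x (op (op z w) y)"
    proof -
      have "op (op x (op z w)) y = op (op (op x z) w) y" using Zw(5)[OF x zS] by simp
      also have "\<dots> = op (op x z) (op w y)" using Zw(4)[OF cl[OF x zS] y] .
      also have "\<dots> = op x (op z (op w y))" using Zz(4)[OF x cl[OF wS y]] .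
      also have "\<dots> = op x (op (op z w) y)" using Zz(3)[OF wS y] by simp
      finally show ?thesis .
    qed
    have r: "op (op x y) (op z w) = op x (op y (op z w))"
    proof -
      have "op (op x y) (op z w) = op (op (op x y) z) w" using Zw(5)[OF cl[OF x y] zS] by simp
      also have "\<dots> = op (op x (op y z)) w" using Zz(5)[OF x y] by simp
      also have "\<dots> = op x (op (op y z) w)" using Zw(5)[OF x cl[OF y zS]] .
      also have "\<dots> = op x (op y (op z w))" using Zw(5)[OF y zS] by simp
      finally show ?thesis .
    qed
    note c l m r }
  ultimately show ?thesis unfolding rl_Z_def by blast
qed

lemma rl_Z_lcancel:
  assumes L: "rl_right_loop S op e" and z: "z \<in> rl_Z S op" and "a \<in> S" "b \<in> S"
    and "op z a = op z b"
  shows "a = b"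
proof -
  have zS: "z \<in> S" using z by (auto simp: rl_Z_def)
  have "op a z = op b z" using rl_ZD(2)[OF z assms(3) assms(3)] rl_ZD(2)[OF z assms(4) assms(4)] assms(5) by simp
  then show ?thesis using rl_cancel[OF L assms(3,4) zS] by simp
qed

lemma rl_Z_inv:
  assumes L: "rl_right_loop S op e" and z: "z \<in> rl_Z S op"
  obtains z' where "z' \<in> rl_Z S op" "op z' z = e" "op z z' = e"
proof -
  note cl = rlD(2)[OF L]
  have zS: "z \<in> S" using z by (auto simp: rl_Z_def)
  have eS: "e \<in> S" using rlD(1)[OF L] .
  obtain w where wS: "w \<in> S" and wz: "op w z = e" using rl_div[OF L zS eS] by blast
  note Zz = rl_ZD[OF z]
  have zw: "op z w = e"
  proof -
    have "op (op z w) z = op z (op w z)" using Zz(5)[OF zS wS] .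
    also have "\<dots> = op e z" using wz rlD(4)[OF L zS] rlD(3)[OF L zS] by simp
    finally show ?thesis using rl_cancel[OF L cl[OF zS wS] eS zS] by simp
  qed
  have zwx: "op z (op w u) = u" if u: "u \<in> S" for u
    using Zz(3)[OF wS u] zw rlD(3)[OF L u] by simp
  have zxw: "op z (op x w) = x" if x: "x \<in> S" for x
  proof -
        have "op z (op x w) = op (op z x) w" using Zz(3)[OF x wS] by simp
        also have "\<dots> = op (op x z) w" using Zz(2)[OF x x] by simp
        also have "\<dots> = op x (op z w)" using Zz(4)[OF x wS] .
        also have "\<dots> = x" using zw rlD(4)[OF L x] by simp
        finally show ?thesis .
      qed
  have "w \<in> rl_Z S op"
  proof -
    { fix x y assume x: "x \<in> S" and y: "y \<in> S"
      have c: "op w x = op x w"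
      proof -
        have "op (op w x) z = op w (op x z)" using Zz(5)[OF wS x] .
        also have "\<dots> = op w (op z x)" using Zz(2)[OF x x] by simp
        also have "\<dots> = op (op w z) x" using Zz(4)[OF wS x] by simp
        also have "\<dots> = x" using wz rlD(3)[OF L x] by simp
        finally have 1: "op (op w x) z = x" .
        have "op (op x w) z = op x (op w z)" using Zz(5)[OF x wS] .
        also have "\<dots> = x" using wz rlD(4)[OF L x] by simp
        finally have 2: "op (op x w) z = x" .
        show ?thesis using rl_cancel[OF L cl[OF wS x] cl[OF x wS] zS] 1 2 by simp
      qed
      have l: "op (op w x) y = op w (op x y)"
      proof -
        have "op z (op (op w x) y) = op (op z (op w x)) y" using Zz(3)[OF cl[OF wS x] y] by simp
        also have "\<dots> = op x y" using zwx[OF x] by simp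
        finally have 1: "op z (op (op w x) y) = op x y" .
        have 2: "op z (op w (op x y)) = op x y" using Zz(3)[OF wS cl[OF x y]] zw rlD(3)[OF L cl[OF x y]] by simp
        show ?thesis using rl_Z_lcancel[OF L z cl[OF cl[OF wS x] y] cl[OF wS cl[OF x y]]] 1 2 by simp
      qed
      have m: "op (op x w) y = op x (op w y)"
      proof -
        have 1: "op z (op (op x w) y) = op x y" using Zz(3)[OF cl[OF x wS] y] zxw[OF x] by simp
        have "op z (op x (op w y)) = op (op z x) (op w y)" using Zz(3)[OF x cl[OF wS y]] by simp
        also have "\<dots> = op (op x z) (op w y)" using Zz(2)[OF x x] by simp
        also have "\<dots> = op x (op z (op w y))" using Zz(4)[OF x cl[OF wS y]] .
        also have "\<dots> = op x y" using zwx[OF y] by simp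
        finally have 2: "op z (op x (op w y)) = op x y" .
        show ?thesis using rl_Z_lcancel[OF L z cl[OF cl[OF x wS] y] cl[OF x cl[OF wS y]]] 1 2 by simp
      qed
      have r: "op (op x y) w = op x (op y w)"
      proof -
        have 1: "op z (op (op x y) w) = op x y"
        proof -
          have "op z (op (op x y) w) = op (op z (op x y)) w" using Zz(3)[OF cl[OF x y] wS] by simp
          also have "\<dots> = op (op (op x y) z) w" using Zz(2)[OF cl[OF x y] x] by simp
          also have "\<dots> = op (op x y) (op z w)" using Zz(4)[OF cl[OF x y] wS] .
          also have "\<dots> = op x y" using zw rlD(4)[OF L cl[OF x y]] by simp
          finally show ?thesis .
        qed
        have "op z (op x (op y w)) = op (op z x) (op y w)" using Zz(3)[OF x cl[OF y wS]] by simp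
        also have "\<dots> = op (op x z) (op y w)" using Zz(2)[OF x x] by simp
        also have "\<dots> = op x (op z (op y w))" using Zz(4)[OF x cl[OF y wS]] .
        also have "\<dots> = op x y" using zxw[OF y] by simp
        finally have 2: "op z (op x (op y w)) = op x y" .
        show ?thesis using rl_Z_lcancel[OF L z cl[OF cl[OF x y] wS] cl[OF x cl[OF y wS]]] 1 2 by simp
      qed
      note c l m r }
    then show ?thesis using wS unfolding rl_Z_def by blast
  qed
  then show ?thesis using that wz zw by blast
qed

lemma rl_Z_swap:
  assumes L: "rl_right_loop S op e" and d: "d \<in> rl_Z S op" and f: "f \<in> rl_Z S op"
    and x: "x \<in> S" and a: "a \<in> S"
  shows "op (op d x) (op f a) = op (op d f) (op x a)"
proof -
  note cl = rlD(2)[OF L]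
  have dS: "d \<in> S" and fS: "f \<in> S" using d f by (auto simp: rl_Z_def)
  have "op (op d x) (op f a) = op d (op x (op f a))" using rl_ZD(3)[OF d x cl[OF fS a]] .
  also have "op x (op f a) = op (op x f) a" using rl_ZD(4)[OF f x a] by simp
  also have "\<dots> = op (op f x) a" using rl_ZD(2)[OF f x x] by simp
  also have "\<dots> = op f (op x a)" using rl_ZD(3)[OF f x a] .
  also have "op d (op f (op x a)) = op (op d f) (op x a)" using rl_ZD(3)[OF d fS cl[OF x a]] by simp
  finally show ?thesis .
qed

lemma rl_sub_rlI:
  assumes L: "rl_right_loop S op e" and RS: "R \<subseteq> S \<times> S" and eR: "(e, e) \<in> R"
    and cl: "\<And>a b c d. (a, b) \<in> R \<Longrightarrow> (c, d) \<in> R \<Longrightarrow> (op a c, op b d) \<in> R"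
    and dv: "\<And>a b c d x y. (a, b) \<in> R \<Longrightarrow> (c, d) \<in> R \<Longrightarrow> x \<in> S \<Longrightarrow> y \<in> S \<Longrightarrow>
              op x a = c \<Longrightarrow> op y b = d \<Longrightarrow> (x, y) \<in> R"
  shows "rl_right_loop R (rl_pop op) (e, e)"
  unfolding rl_right_loop_def
proof (intro conjI ballI)
  show "(e, e) \<in> R" by fact
next
  fix p q assume "p \<in> R" "q \<in> R" then show "rl_pop op p q \<in> R"
    using cl by (cases p, cases q) (auto simp: rl_pop_def)
next
  fix p assume "p \<in> R" then show "rl_pop op (e, e) p = p" "rl_pop op p (e, e) = p"
    using RS rlD(3,4)[OF L] by (cases p; auto simp: rl_pop_def)+
next
  fix p q assume p: "p \<in> R" and q: "q \<in> R"
  obtain a b where pab: "p = (a, b)" by (cases p)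
  obtain c d where qcd: "q = (c, d)" by (cases q)
  have S4: "a \<in> S" "b \<in> S" "c \<in> S" "d \<in> S" using RS p q pab qcd by auto
  obtain x where x: "x \<in> S" "op x a = c" using rl_div[OF L S4(1) S4(3)] by blast
  obtain y where y: "y \<in> S" "op y b = d" using rl_div[OF L S4(2) S4(4)] by blast
  have xyR: "(x, y) \<in> R" using dv[of a b c d x y] p q pab qcd x y by simp
  show "\<exists>!z. z \<in> R \<and> rl_pop op z p = q"
  proof (rule ex1I[of _ "(x, y)"])
    show "(x, y) \<in> R \<and> rl_pop op (x, y) p = q" using xyR x y pab qcd by (simp add: rl_pop_def)
  next
    fix z assume z: "z \<in> R \<and> rl_pop op z p = q"
    obtain u v where zuv: "z = (u, v)" by (cases z)
    have "u \<in> S" "v \<in> S" using z zuv RS by auto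
    moreover have "op u a = c" "op v b = d" using z zuv pab qcd by (auto simp: rl_pop_def)
    ultimately show "z = (x, y)" using rl_cancel[OF L _ x(1) S4(1)] rl_cancel[OF L _ y(1) S4(2)] x y zuv
      by metis
  qed
qed

lemma rl_congruenceI:
  assumes L: "rl_right_loop S op e" and eq: "equiv S R" and eR: "(e, e) \<in> R"
    and cl: "\<And>a b c d. (a, b) \<in> R \<Longrightarrow> (c, d) \<in> R \<Longrightarrow> (op a c, op b d) \<in> R"
    and dv: "\<And>a b c d x y. (a, b) \<in> R \<Longrightarrow> (c, d) \<in> R \<Longrightarrow> x \<in> S \<Longrightarrow> y \<in> S \<Longrightarrow>
              op x a = c \<Longrightarrow> op y b = d \<Longrightarrow> (x, y) \<in> R"
  shows "rl_congruence S op e R"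
proof -
  have RS: "R \<subseteq> S \<times> S" using eq by (auto simp: equiv_def refl_on_def)
  have "rl_right_loop R (rl_pop op) (e, e)"
    by (rule rl_sub_rlI[OF L RS eR], rule cl, assumption+, rule dv, assumption+)
  then show ?thesis unfolding rl_congruence_def using eq RS by blast
qed

lemma rl_congD:
  assumes "rl_congruence S op e R"
  shows "equiv S R" "R \<subseteq> S \<times> S" "rl_right_loop R (rl_pop op) (e, e)"
  using assms unfolding rl_congruence_def by auto

lemma rl_cong_closed:
  assumes "rl_congruence S op e R" "(a, b) \<in> R" "(c, d) \<in> R"
  shows "(op a c, op b d) \<in> R"
  using rlD(2)[OF rl_congD(3)[OF assms(1)] assms(2,3)] by (simp add: rl_pop_def)

lemma rl_cong_div:
  assumes L: "rl_right_loop S op e" and C: "rl_congruence S op e R"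
    and "(a, b) \<in> R" "(c, d) \<in> R" "x \<in> S" "y \<in> S" "op x a = c" "op y b = d"
  shows "(x, y) \<in> R"
proof -
  have RS: "R \<subseteq> S \<times> S" using rl_congD(2)[OF C] .
  obtain z where z: "z \<in> R" "rl_pop op z (a, b) = (c, d)"
    using rlD(5)[OF rl_congD(3)[OF C] assms(3,4)] by blast
  obtain u v where zuv: "z = (u, v)" by (cases z)
  have "u \<in> S" "v \<in> S" "a \<in> S" "b \<in> S" using z zuv RS assms(3) by auto
  moreover have "op u a = c" "op v b = d" using z zuv by (auto simp: rl_pop_def)
  ultimately have "u = x" "v = y" using rl_cancel[OF L] assms(5-8) by metis+
  then show ?thesis using z zuv by simp
qed

lemma rl_prod: assumes L: "rl_right_loop S op e" shows "rl_congruence S op e (S \<times> S)"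
  by (rule rl_congruenceI[OF L]) (auto simp: equiv_def refl_on_def sym_def trans_def rlD[OF L])

definition rl_bZ :: "'a set \<Rightarrow> ('a \<Rightarrow> 'a \<Rightarrow> 'a) \<Rightarrow> 'a rel" where
  "rl_bZ S op = {(x, y). x \<in> S \<and> y \<in> S \<and> (\<exists>z\<in>rl_Z S op. x = op z y)}"

lemma rl_Z_sub: "rl_Z S op \<subseteq> S" by (auto simp: rl_Z_def)
lemma rl_Z_in: "z \<in> rl_Z S op \<Longrightarrow> z \<in> S" by (simp add: rl_Z_def)

lemma rl_bZ_sym_ex:
  assumes L: "rl_right_loop S op e" and z: "z \<in> rl_Z S op" and y: "y \<in> S"
  shows "\<exists>w\<in>rl_Z S op. y = op w (op z y)"
proof -
  obtain w where w: "w \<in> rl_Z S op" "op w z = e" "op z w = e" using rl_Z_inv[OF L z] by blast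
  have zS: "z \<in> S" using rl_Z_in[OF z] .
  have "op w (op z y) = op (op w z) y" using rl_ZD(3)[OF w(1) zS y] by simp
  also have "\<dots> = y" using w(2) rlD(3)[OF L y] by simp
  finally have "y = op w (op z y)" by simp
  then show ?thesis using w(1) by blast
qed

lemma rl_bZ_cong:
  assumes L: "rl_right_loop S op e"
  shows "rl_congruence S op e (rl_bZ S op)"
proof (rule rl_congruenceI[OF L])
  note cl = rlD(2)[OF L]
  have sub: "rl_bZ S op \<subseteq> S \<times> S" by (auto simp: rl_bZ_def)
  have rf: "(x, x) \<in> rl_bZ S op" if x: "x \<in> S" for x
  proof -
    have "x = op e x" using rlD(3)[OF L x] by simp
    then show ?thesis using x rl_Z_e[OF L] unfolding rl_bZ_def by blast
  qed
  have sy: "(y, x) \<in> rl_bZ S op" if H: "(x, y) \<in> rl_bZ S op" for x y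
  proof -
    obtain z where "x \<in> S" "y \<in> S" "z \<in> rl_Z S op" "x = op z y" using H unfolding rl_bZ_def by blast
    then show ?thesis using rl_bZ_sym_ex[OF L] unfolding rl_bZ_def by blast
  qed
  have tr: "(x, u) \<in> rl_bZ S op" if H: "(x, y) \<in> rl_bZ S op" "(y, u) \<in> rl_bZ S op" for x y u
  proof -
    obtain z w where "x \<in> S" "y \<in> S" "u \<in> S" "z \<in> rl_Z S op" "x = op z y"
        "w \<in> rl_Z S op" "y = op w u" using H unfolding rl_bZ_def by blast
    moreover then have "op z (op w u) = op (op z w) u" using rl_ZD(3)[of z S op w u] rl_Z_in by metis
    ultimately show ?thesis using rl_Z_mult[OF L] unfolding rl_bZ_def by blast
  qed
  show "equiv S (rl_bZ S op)"
    unfolding equiv_def refl_on_def sym_def trans_def using sub rf sy tr by blast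
next
  have "e = op e e" using rlD(1,3)[OF L] by simp
  then show "(e, e) \<in> rl_bZ S op" using rl_Z_e[OF L] rlD(1)[OF L] unfolding rl_bZ_def by blast
next
  note cl = rlD(2)[OF L]
  fix a b c d assume "(a, b) \<in> rl_bZ S op" "(c, d) \<in> rl_bZ S op"
  then obtain z w where "a \<in> S" "b \<in> S" "c \<in> S" "d \<in> S" "z \<in> rl_Z S op" "a = op z b"
        "w \<in> rl_Z S op" "c = op w d" by (auto simp: rl_bZ_def)
  moreover have "op a c = op (op z w) (op b d)" using rl_Z_swap[OF L \<open>z \<in> rl_Z S op\<close> \<open>w \<in> rl_Z S op\<close> \<open>b \<in> S\<close> \<open>d \<in> S\<close>] calculation by simp
  ultimately show "(op a c, op b d) \<in> rl_bZ S op"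
    using rl_Z_mult[OF L] cl unfolding rl_bZ_def by blast
next
  note cl = rlD(2)[OF L]
  fix a b c d x y assume "(a, b) \<in> rl_bZ S op" "(c, d) \<in> rl_bZ S op" and x: "x \<in> S" and y: "y \<in> S"
    and xa: "op x a = c" and yb: "op y b = d"
  then obtain w z where S4: "a \<in> S" "b \<in> S" "c \<in> S" "d \<in> S" and w: "w \<in> rl_Z S op" "a = op w b"
        and z: "z \<in> rl_Z S op" "c = op z d" by (auto simp: rl_bZ_def)
  obtain w' where w': "w' \<in> rl_Z S op" "op w' w = e" "op w w' = e" using rl_Z_inv[OF L w(1)] by blast
  define u where "u = op z w'"
  have u: "u \<in> rl_Z S op" using rl_Z_mult[OF L z(1) w'(1)] u_def by simp
  have uS: "u \<in> S" using rl_Z_in[OF u] .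
  have zS: "z \<in> S" and w'S: "w' \<in> S" using rl_Z_in[OF z(1)] rl_Z_in[OF w'(1)] by auto
  have uw: "op u w = z"
    using rl_ZD(5)[OF w(1) zS w'S] w'(2) rlD(4)[OF L zS] u_def by simp
  have "op (op u y) a = op (op u w) (op y b)" using rl_Z_swap[OF L u w(1) y S4(2)] w(2) by simp
  also have "\<dots> = c" using uw yb z(2) by simp
  finally have "op (op u y) a = op x a" using xa by simp
  then have "x = op u y" using rl_cancel[OF L x cl[OF uS y] S4(1)] by simp
  then show "(x, y) \<in> rl_bZ S op" using x y u by (auto simp: rl_bZ_def)
qed

definition rl_bC :: "'a set \<Rightarrow> ('a \<Rightarrow> 'a \<Rightarrow> 'a) \<Rightarrow> ('a \<times> 'a) rel" where
  "rl_bC S op = {((x, y), (u, v)). x \<in> S \<and> u \<in> S \<and> (\<exists>d\<in>rl_Z S op. y = op d x \<and> v = op d u)}"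

lemma rl_bZ_form:
  assumes L: "rl_right_loop S op e" and xy: "(x, y) \<in> rl_bZ S op"
  obtains d where "d \<in> rl_Z S op" "y = op d x" "x \<in> S" "y \<in> S"
proof -
  have "(y, x) \<in> rl_bZ S op" using xy rl_congD(1)[OF rl_bZ_cong[OF L]] by (auto simp: equiv_def sym_def)
  then show ?thesis using that unfolding rl_bZ_def by blast
qed

lemma rl_bZ_mem:
  assumes L: "rl_right_loop S op e" and d: "d \<in> rl_Z S op" and x: "x \<in> S"
  shows "(x, op d x) \<in> rl_bZ S op"
proof -
  have dx: "op d x \<in> S" using rlD(2)[OF L rl_Z_in[OF d] x] .
  show ?thesis using rl_bZ_sym_ex[OF L d x] x dx unfolding rl_bZ_def by blast
qed

lemma rl_Z_uniq:
  assumes L: "rl_right_loop S op e" and "d \<in> rl_Z S op" "f \<in> rl_Z S op" "x \<in> S" "op d x = op f x"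
  shows "d = f"
  using rl_cancel[OF L rl_Z_in[OF assms(2)] rl_Z_in[OF assms(3)] assms(4,5)] .

lemma rl_bC_cong:
  assumes L: "rl_right_loop S op e"
  shows "rl_congruence (rl_bZ S op) (rl_pop op) (e, e) (rl_bC S op)"
proof (rule rl_congruenceI[OF rl_congD(3)[OF rl_bZ_cong[OF L]]])
  note cl = rlD(2)[OF L]
  have sub: "rl_bC S op \<subseteq> rl_bZ S op \<times> rl_bZ S op"
  proof
    fix p assume "p \<in> rl_bC S op"
    then obtain x y u v d where p: "p = ((x, y), (u, v))" "x \<in> S" "u \<in> S" "d \<in> rl_Z S op"
      "y = op d x" "v = op d u" unfolding rl_bC_def by blast
    then show "p \<in> rl_bZ S op \<times> rl_bZ S op" using rl_bZ_mem[OF L] by auto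
  qed
  have rf: "(p, p) \<in> rl_bC S op" if p: "p \<in> rl_bZ S op" for p
  proof -
    obtain x y where pxy: "p = (x, y)" by (cases p)
    obtain d where "d \<in> rl_Z S op" "y = op d x" "x \<in> S" "y \<in> S" using rl_bZ_form[OF L] p pxy by blast
    then show ?thesis using pxy unfolding rl_bC_def by blast
  qed
  have sy: "(q, p) \<in> rl_bC S op" if "(p, q) \<in> rl_bC S op" for p q
    using that unfolding rl_bC_def by blast
  have tr: "(p, r) \<in> rl_bC S op" if H: "(p, q) \<in> rl_bC S op" "(q, r) \<in> rl_bC S op" for p q r
  proof -
    obtain x y u v d where 1: "p = (x, y)" "q = (u, v)" "x \<in> S" "u \<in> S" "d \<in> rl_Z S op"
      "y = op d x" "v = op d u" using H(1) unfolding rl_bC_def by blast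
    obtain u' v' a b f where 2: "q = (u', v')" "r = (a, b)" "u' \<in> S" "a \<in> S" "f \<in> rl_Z S op"
      "v' = op f u'" "b = op f a" using H(2) unfolding rl_bC_def by blast
    have "op d u = op f u" using 1 2 by auto
    then have "d = f" using rl_Z_uniq[OF L 1(5) 2(5) 1(4)] by simp
    then show ?thesis using 1 2 unfolding rl_bC_def by blast
  qed
  show "equiv (rl_bZ S op) (rl_bC S op)"
    unfolding equiv_def refl_on_def sym_def trans_def using sub rf sy tr by blast
next
  have "e = op e e" using rlD(1,3)[OF L] by simp
  then show "((e, e), e, e) \<in> rl_bC S op" using rl_Z_e[OF L] rlD(1)[OF L] unfolding rl_bC_def by blast
next
  note cl = rlD(2)[OF L]
  fix p q r t assume H: "(p, q) \<in> rl_bC S op" "(r, t) \<in> rl_bC S op"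
  obtain x y u v d where 1: "p = (x, y)" "q = (u, v)" "x \<in> S" "u \<in> S" "d \<in> rl_Z S op"
      "y = op d x" "v = op d u" using H(1) unfolding rl_bC_def by blast
  obtain a b c k f where 2: "r = (a, b)" "t = (c, k)" "a \<in> S" "c \<in> S" "f \<in> rl_Z S op"
      "b = op f a" "k = op f c" using H(2) unfolding rl_bC_def by blast
  have "op y b = op (op d f) (op x a)" "op v k = op (op d f) (op u c)"
    using rl_Z_swap[OF L 1(5) 2(5)] 1 2 by auto
  moreover have "op d f \<in> rl_Z S op" using rl_Z_mult[OF L 1(5) 2(5)] .
  moreover have "op x a \<in> S" "op u c \<in> S" using cl 1 2 by auto
  ultimately show "(rl_pop op p r, rl_pop op q t) \<in> rl_bC S op"
    using 1 2 unfolding rl_bC_def rl_pop_def by auto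
next
  note cl = rlD(2)[OF L]
  fix p q r t X Y assume H: "(p, q) \<in> rl_bC S op" "(r, t) \<in> rl_bC S op"
    and X: "X \<in> rl_bZ S op" and Y: "Y \<in> rl_bZ S op"
    and XP: "rl_pop op X p = r" and YQ: "rl_pop op Y q = t"
  obtain a a' b b' d where 1: "p = (a, a')" "q = (b, b')" "a \<in> S" "b \<in> S" "d \<in> rl_Z S op"
      "a' = op d a" "b' = op d b" using H(1) unfolding rl_bC_def by blast
  obtain c c' k k' h where 2: "r = (c, c')" "t = (k, k')" "c \<in> S" "k \<in> S" "h \<in> rl_Z S op"
      "c' = op h c" "k' = op h k" using H(2) unfolding rl_bC_def by blast
  obtain x1 x2 where Xx: "X = (x1, x2)" by (cases X)
  obtain y1 y2 where Yy: "Y = (y1, y2)" by (cases Y)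
  obtain f where f: "f \<in> rl_Z S op" "x2 = op f x1" "x1 \<in> S" using rl_bZ_form[OF L] X Xx by blast
  obtain g where g: "g \<in> rl_Z S op" "y2 = op g y1" "y1 \<in> S" using rl_bZ_form[OF L] Y Yy by blast
  have e1: "op x1 a = c" "op x2 a' = c'" using XP Xx 1 2 by (auto simp: rl_pop_def)
  have e2: "op y1 b = k" "op y2 b' = k'" using YQ Yy 1 2 by (auto simp: rl_pop_def)
  have "op (op f d) (op x1 a) = op h (op x1 a)"
    using rl_Z_swap[OF L f(1) 1(5) f(3) 1(3)] e1 f(2) 1(6) 2(6) by simp
  then have fd: "op f d = h" using rl_Z_uniq[OF L rl_Z_mult[OF L f(1) 1(5)] 2(5) cl[OF f(3) 1(3)]] by simp
  have "op (op g d) (op y1 b) = op h (op y1 b)"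
    using rl_Z_swap[OF L g(1) 1(5) g(3) 1(4)] e2 g(2) 1(7) 2(7) by simp
  then have gd: "op g d = h" using rl_Z_uniq[OF L rl_Z_mult[OF L g(1) 1(5)] 2(5) cl[OF g(3) 1(4)]] by simp
  have "f = g" using rl_cancel[OF L rl_Z_in[OF f(1)] rl_Z_in[OF g(1)] rl_Z_in[OF 1(5)]] fd gd by simp
  then show "(X, Y) \<in> rl_bC S op" using Xx Yy f g unfolding rl_bC_def by blast
qed

lemma rl_bZ_central:
  assumes L: "rl_right_loop S op e"
  shows "rl_central S op e (rl_bZ S op)"
  unfolding rl_central_def rl_centralizes_def
proof (intro conjI exI[of _ "rl_bC S op"])
  note cl = rlD(2)[OF L]
  show "rl_congruence S op e (rl_bZ S op)" using rl_bZ_cong[OF L] .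
  show "rl_congruence S op e (S \<times> S)" using rl_prod[OF L] .
  show "rl_congruence (rl_bZ S op) (rl_pop op) (e, e) (rl_bC S op)" using rl_bC_cong[OF L] .
  show "\<forall>x y u v. ((x, y), u, v) \<in> rl_bC S op \<longrightarrow> (x, u) \<in> S \<times> S"
    unfolding rl_bC_def by blast
  show "\<forall>x y. (x, y) \<in> rl_bZ S op \<longrightarrow> bij_betw fst (rl_bC S op `` {(x, y)}) ((S \<times> S) `` {x})"
  proof (intro allI impI)
    fix x y assume xy: "(x, y) \<in> rl_bZ S op"
    obtain d where d: "d \<in> rl_Z S op" "y = op d x" "x \<in> S" "y \<in> S" using rl_bZ_form[OF L xy] by blast
    have img: "rl_bC S op `` {(x, y)} = (\<lambda>u. (u, op d u)) ` S"
    proof (intro equalityI subsetI)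
      fix p assume "p \<in> rl_bC S op `` {(x, y)}"
      then obtain u v f where "p = (u, v)" "u \<in> S" "f \<in> rl_Z S op" "y = op f x" "v = op f u"
        unfolding rl_bC_def by blast
      moreover then have "f = d" using rl_Z_uniq[OF L _ d(1) d(3)] d(2) by simp
      ultimately show "p \<in> (\<lambda>u. (u, op d u)) ` S" by blast
    next
      fix p assume "p \<in> (\<lambda>u. (u, op d u)) ` S"
      then obtain u where "p = (u, op d u)" "u \<in> S" by blast
      then show "p \<in> rl_bC S op `` {(x, y)}" using d unfolding rl_bC_def by blast
    qed
    have "(S \<times> S) `` {x} = S" using d(3) by blast
    moreover have "bij_betw fst ((\<lambda>u. (u, op d u)) ` S) S"
      by (auto simp: bij_betw_def inj_on_def image_image)
    ultimately show "bij_betw fst (rl_bC S op `` {(x, y)}) ((S \<times> S) `` {x})" using img by simp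
  qed
  show "\<forall>x y. (x, y) \<in> S \<times> S \<longrightarrow> ((x, x), y, y) \<in> rl_bC S op"
  proof (intro allI impI)
    fix x y assume "(x, y) \<in> S \<times> S"
    moreover have "x = op e x" "y = op e y" using calculation rlD(3)[OF L] by auto
    ultimately show "((x, x), y, y) \<in> rl_bC S op" using rl_Z_e[OF L] unfolding rl_bC_def by blast
  qed
  show "\<forall>x y u v. ((x, y), u, v) \<in> rl_bC S op \<longrightarrow> ((y, x), v, u) \<in> rl_bC S op"
  proof (intro allI impI)
    fix x y u v assume "((x, y), u, v) \<in> rl_bC S op"
    then obtain d where d: "x \<in> S" "u \<in> S" "d \<in> rl_Z S op" "y = op d x" "v = op d u"
      unfolding rl_bC_def by blast
    obtain d' where d': "d' \<in> rl_Z S op" "op d' d = e" "op d d' = e" using rl_Z_inv[OF L d(3)] by blast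
    have "op d' (op d x) = op (op d' d) x" using rl_ZD(3)[OF d'(1) rl_Z_in[OF d(3)] d(1)] by simp
    then have 1: "x = op d' y" using d'(2) rlD(3)[OF L d(1)] d(4) by simp
    have "op d' (op d u) = op (op d' d) u" using rl_ZD(3)[OF d'(1) rl_Z_in[OF d(3)] d(2)] by simp
    then have 2: "u = op d' v" using d'(2) rlD(3)[OF L d(2)] d(5) by simp
    have "y \<in> S" "v \<in> S" using d cl[OF rl_Z_in[OF d(3)]] by auto
    then show "((y, x), v, u) \<in> rl_bC S op" using 1 2 d'(1) unfolding rl_bC_def by blast
  qed
  show "\<forall>x y z u v w. ((x, y), u, v) \<in> rl_bC S op \<and> ((y, z), v, w) \<in> rl_bC S op \<longrightarrow>
      ((x, z), u, w) \<in> rl_bC S op"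
  proof (intro allI impI)
    fix x y z u v w assume H: "((x, y), u, v) \<in> rl_bC S op \<and> ((y, z), v, w) \<in> rl_bC S op"
    then obtain d where d: "x \<in> S" "u \<in> S" "d \<in> rl_Z S op" "y = op d x" "v = op d u"
      unfolding rl_bC_def by blast
    obtain f where f: "f \<in> rl_Z S op" "z = op f y" "w = op f v"
      using H unfolding rl_bC_def by blast
    have "z = op (op f d) x" using f(2) d(4) rl_ZD(3)[OF f(1) rl_Z_in[OF d(3)] d(1)] by simp
    moreover have "w = op (op f d) u" using f(3) d(5) rl_ZD(3)[OF f(1) rl_Z_in[OF d(3)] d(2)] by simp
    ultimately show "((x, z), u, w) \<in> rl_bC S op"
      using d rl_Z_mult[OF L f(1) d(3)] unfolding rl_bC_def by blast
  qed
qed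

lemma rl_central_sub:
  assumes L: "rl_right_loop S op e" and cen: "rl_central S op e \<beta>"
  shows "\<beta> \<subseteq> rl_bZ S op"
proof -
  note cl = rlD(2)[OF L]
  have B: "rl_congruence S op e \<beta>" using cen unfolding rl_central_def rl_centralizes_def by blast
  obtain C where CC: "rl_congruence \<beta> (rl_pop op) (e, e) C"
    and ii: "\<forall>x y. (x, y) \<in> \<beta> \<longrightarrow> bij_betw fst (C `` {(x, y)}) ((S \<times> S) `` {x})"
    and iii: "\<forall>x y. (x, y) \<in> S \<times> S \<longrightarrow> ((x, x), (y, y)) \<in> C"
    using cen unfolding rl_central_def rl_centralizes_def by blast
  have Beq: "equiv S \<beta>" and BS: "\<beta> \<subseteq> S \<times> S" using rl_congD[OF B] by auto
  have Ceq: "equiv \<beta> C" using rl_congD(1)[OF CC] .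
  have Bsym: "(y, x) \<in> \<beta>" if "(x, y) \<in> \<beta>" for x y using Beq that by (auto simp: equiv_def sym_def)
  have Csym: "(q, p) \<in> C" if "(p, q) \<in> C" for p q using Ceq that unfolding equiv_def by (meson symD)
  have Crefl: "(p, p) \<in> C" if "p \<in> \<beta>" for p using Ceq that by (auto simp: equiv_def refl_on_def)
  have Brefl: "(x, x) \<in> \<beta>" if "x \<in> S" for x using Beq that by (auto simp: equiv_def refl_on_def)
  have aC: "((x, op d x), (u, op d u)) \<in> C" if d: "d \<in> S" and x: "x \<in> S" and dx: "(x, op d x) \<in> \<beta>"
    and u: "u \<in> S" for d x u
  proof -
    have "op e x = x" using rlD(3)[OF L x] .
    then have ed: "(e, d) \<in> \<beta>" using rl_cong_div[OF L B Brefl[OF x] dx rlD(1)[OF L] d] by simp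
    have "(rl_pop op (e, d) (x, x), rl_pop op (e, d) (u, u)) \<in> C"
      using rl_cong_closed[OF CC Crefl[OF ed] iii[rule_format, of x u]] x u by simp
    then show ?thesis using rlD(3)[OF L x] rlD(3)[OF L u] by (simp add: rl_pop_def)
  qed
  have b: "v = v'" if "((x, y), (u, v)) \<in> C" "((x, y), (u, v')) \<in> C" "(x, y) \<in> \<beta>" for x y u v v'
  proof -
    have inj: "inj_on fst (C `` {(x, y)})" using ii that(3) by (auto simp: bij_betw_def)
    have m: "(u, v) \<in> C `` {(x, y)}" "(u, v') \<in> C `` {(x, y)}" using that(1,2) by auto
    have "(u, v) = (u, v')" by (rule inj_onD[OF inj _ m]) simp
    then show ?thesis by simp
  qed
  have tx: "(x, op t x) \<in> \<beta>" if t: "(t, e) \<in> \<beta>" and x: "x \<in> S" for t x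
  proof -
    have "(op t x, op e x) \<in> \<beta>" using rl_cong_closed[OF B t Brefl[OF x]] .
    then show ?thesis using rlD(3)[OF L x] Bsym by simp
  qed
  have tS: "t \<in> S" if "(t, e) \<in> \<beta>" for t using that BS by auto
  have N1: "op (op t x) (op s a) = op (op t s) (op x a)"
    if t: "(t, e) \<in> \<beta>" and s: "(s, e) \<in> \<beta>" and x: "x \<in> S" and a: "a \<in> S" for t s x a
  proof -
    have eS: "e \<in> S" using rlD(1)[OF L] .
    have P1: "((x, op t x), (e, op t e)) \<in> C" using aC[OF tS[OF t] x tx[OF t x] eS] .
    have P2: "((a, op s a), (e, op s e)) \<in> C" using aC[OF tS[OF s] a tx[OF s a] eS] .
    have "(rl_pop op (x, op t x) (a, op s a), rl_pop op (e, op t e) (e, op s e)) \<in> C"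
      using rl_cong_closed[OF CC P1 P2] .
    then have 1: "((op x a, op (op t x) (op s a)), (e, op t s)) \<in> C"
      using rlD(3,4)[OF L] tS[OF t] tS[OF s] eS by (simp add: rl_pop_def)
    have ts: "(op t s, e) \<in> \<beta>" using rl_cong_closed[OF B t s] rlD(3)[OF L eS] by simp
    have 2: "((op x a, op (op t s) (op x a)), (e, op (op t s) e)) \<in> C"
      using aC[OF cl[OF tS[OF t] tS[OF s]] cl[OF x a] tx[OF ts cl[OF x a]] eS] .
    then have 2: "((op x a, op (op t s) (op x a)), (e, op t s)) \<in> C"
      using rlD(4)[OF L cl[OF tS[OF t] tS[OF s]]] by simp
    have "(e, op t s) \<in> \<beta>" using Bsym[OF ts] .
    then show ?thesis using b[OF Csym[OF 1] Csym[OF 2]] by simp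
  qed
  have TZ: "t \<in> rl_Z S op" if t: "(t, e) \<in> \<beta>" for t
  proof -
    have ee: "(e, e) \<in> \<beta>" using Brefl[OF rlD(1)[OF L]] .
    have t0: "t \<in> S" using tS[OF t] .
    have eS: "e \<in> S" using rlD(1)[OF L] .
    { fix x y assume x: "x \<in> S" and y: "y \<in> S"
      have c: "op t x = op x t" using N1[OF ee t x eS] rlD(3,4)[OF L] x t0 by simp
      have l: "op (op t x) y = op t (op x y)" using N1[OF t ee x y] rlD(3,4)[OF L] x y t0 by simp
      have q: "op x (op t y) = op t (op x y)" if x: "x \<in> S" and y: "y \<in> S" for x y
        using N1[OF ee t x y] rlD(3,4)[OF L] x y t0 by simp
      have cc: "op t w = op w t" if "w \<in> S" for w using N1[OF ee t that eS] rlD(3,4)[OF L] that t0 by simp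
      have m: "op (op x t) y = op x (op t y)" using l q[OF x y] cc[OF x] by simp
      have r: "op (op x y) t = op x (op y t)"
        using cc[OF cl[OF x y]] q[OF x y] cc[OF y] by simp
      note c l m r }
    then show ?thesis using t0 unfolding rl_Z_def by blast
  qed
  show ?thesis
  proof
    fix p assume p: "p \<in> \<beta>"
    obtain x y where pxy: "p = (x, y)" by (cases p)
    have xS: "x \<in> S" and yS: "y \<in> S" using p pxy BS by auto
    obtain t where t: "t \<in> S" "op t y = x" using rl_div[OF L yS xS] by blast
    have "(t, e) \<in> \<beta>" using rl_cong_div[OF L B Brefl[OF yS] p[unfolded pxy] t(1) rlD(1)[OF L]] t(2) rlD(3)[OF L yS] by simp
    then show "p \<in> rl_bZ S op" using TZ t xS yS pxy unfolding rl_bZ_def by blast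
  qed
qed

lemma rl_zeta_eq:
  assumes L: "rl_right_loop S op e"
  shows "rl_zeta S op e = rl_bZ S op"
  unfolding rl_zeta_def
proof (rule the_equality)
  show "rl_central S op e (rl_bZ S op) \<and> (\<forall>\<beta>'. rl_central S op e \<beta>' \<longrightarrow> \<beta>' \<subseteq> rl_bZ S op)"
    using rl_bZ_central[OF L] rl_central_sub[OF L] by blast
  fix \<beta> assume "rl_central S op e \<beta> \<and> (\<forall>\<beta>'. rl_central S op e \<beta>' \<longrightarrow> \<beta>' \<subseteq> \<beta>)"
  then show "\<beta> = rl_bZ S op" using rl_bZ_central[OF L] rl_central_sub[OF L] by blast
qed

lemma rl_center_eq:
  assumes L: "rl_right_loop S op e"
  shows "rl_center S op e = rl_Z S op"
proof -
  have "rl_bZ S op `` {e} = rl_Z S op"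
  proof (intro equalityI subsetI)
    fix y assume "y \<in> rl_bZ S op `` {e}"
    then have "(e, y) \<in> rl_bZ S op" by simp
    then obtain d where "d \<in> rl_Z S op" "y = op d e" using rl_bZ_form[OF L] by blast
    then show "y \<in> rl_Z S op" using rlD(4)[OF L rl_Z_in] by metis
  next
    fix y assume y: "y \<in> rl_Z S op"
    have "(e, op y e) \<in> rl_bZ S op" using rl_bZ_mem[OF L y rlD(1)[OF L]] .
    then show "y \<in> rl_bZ S op `` {e}" using rlD(4)[OF L rl_Z_in[OF y]] by simp
  qed
  then show ?thesis unfolding rl_center_def rl_zeta_eq[OF L] .
qed

section \<open>Quotients\<close>

lemma rl_cong_equiv_facts:
  assumes C: "rl_congruence S op e R"
  shows "\<And>x. x \<in> S \<Longrightarrow> (x, x) \<in> R" "\<And>x y. (x, y) \<in> R \<Longrightarrow> (y, x) \<in> R"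
    "\<And>x y z. (x, y) \<in> R \<Longrightarrow> (y, z) \<in> R \<Longrightarrow> (x, z) \<in> R"
    "\<And>x y. (x, y) \<in> R \<Longrightarrow> x \<in> S" "\<And>x y. (x, y) \<in> R \<Longrightarrow> y \<in> S"
proof -
  have eq: "equiv S R" using rl_congD(1)[OF C] .
  show "\<And>x. x \<in> S \<Longrightarrow> (x, x) \<in> R" using eq by (simp add: equiv_def refl_on_def)
  show "\<And>x y. (x, y) \<in> R \<Longrightarrow> (y, x) \<in> R" using eq unfolding equiv_def by (meson symD)
  show "\<And>x y z. (x, y) \<in> R \<Longrightarrow> (y, z) \<in> R \<Longrightarrow> (x, z) \<in> R" using eq unfolding equiv_def by (meson transD)
  show "\<And>x y. (x, y) \<in> R \<Longrightarrow> x \<in> S" "\<And>x y. (x, y) \<in> R \<Longrightarrow> y \<in> S"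
    using rl_congD(2)[OF C] by auto
qed

lemma rl_cong_coset:
  assumes L: "rl_right_loop S op e" and C: "rl_congruence S op e R" and y: "y \<in> S"
  shows "rl_coset op (R `` {e}) y = R `` {y}"
proof (intro equalityI subsetI)
  note F = rl_cong_equiv_facts[OF C]
  fix x assume "x \<in> rl_coset op (R `` {e}) y"
  then obtain t where t: "(e, t) \<in> R" "x = op t y" unfolding rl_coset_def by blast
  have "(op t y, op e y) \<in> R" using rl_cong_closed[OF C F(2)[OF t(1)] F(1)[OF y]] .
  then show "x \<in> R `` {y}" using t(2) rlD(3)[OF L y] F(2) by auto
next
  note F = rl_cong_equiv_facts[OF C]
  fix x assume "x \<in> R `` {y}"
  then have xy: "(x, y) \<in> R" using F(2) by blast
  have xS: "x \<in> S" using F(4)[OF xy] .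
  obtain t where t: "t \<in> S" "op t y = x" using rl_div[OF L y xS] by blast
  have "(t, e) \<in> R" using rl_cong_div[OF L C F(1)[OF y] xy t(1) rlD(1)[OF L]] t(2) rlD(3)[OF L y] by simp
  then show "x \<in> rl_coset op (R `` {e}) y" using t(2) F(2) unfolding rl_coset_def by blast
qed

lemma rl_qrep_props:
  assumes L: "rl_right_loop S op e" and C: "rl_congruence S op e R" and x: "x \<in> S"
  shows "rl_qrep S op (R `` {e}) x \<in> S" "(rl_qrep S op (R `` {e}) x, x) \<in> R"
proof -
  note F = rl_cong_equiv_facts[OF C]
  let ?T = "R `` {e}"
  have "\<exists>y. y \<in> S \<and> rl_coset op ?T y = rl_coset op ?T x" using x by blast
  then have h: "rl_qrep S op ?T x \<in> S \<and> rl_coset op ?T (rl_qrep S op ?T x) = rl_coset op ?T x"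
    unfolding rl_qrep_def by (rule someI_ex)
  then show "rl_qrep S op ?T x \<in> S" by simp
  have "R `` {rl_qrep S op ?T x} = R `` {x}"
    using h rl_cong_coset[OF L C x] rl_cong_coset[OF L C, of "rl_qrep S op ?T x"] by simp
  then show "(rl_qrep S op ?T x, x) \<in> R" using x eq_equiv_class_iff[OF rl_congD(1)[OF C]] h by blast
qed

lemma rl_qrep_eq:
  assumes L: "rl_right_loop S op e" and C: "rl_congruence S op e R" and x: "x \<in> S" and y: "y \<in> S"
  shows "rl_qrep S op (R `` {e}) x = rl_qrep S op (R `` {e}) y \<longleftrightarrow> (x, y) \<in> R"
proof
  note F = rl_cong_equiv_facts[OF C]
  let ?p = "rl_qrep S op (R `` {e})"
  assume "?p x = ?p y"
  then show "(x, y) \<in> R" using rl_qrep_props(2)[OF L C x] rl_qrep_props(2)[OF L C y] F(2,3) by metis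
next
  let ?T = "R `` {e}"
  assume "(x, y) \<in> R"
  then have "R `` {x} = R `` {y}" using eq_equiv_class_iff[OF rl_congD(1)[OF C] x y] by simp
  then have "rl_coset op ?T x = rl_coset op ?T y" using rl_cong_coset[OF L C] x y by simp
  then show "rl_qrep S op ?T x = rl_qrep S op ?T y" unfolding rl_qrep_def by simp
qed

lemma rl_qop_hom:
  assumes L: "rl_right_loop S op e" and C: "rl_congruence S op e R" and x: "x \<in> S" and y: "y \<in> S"
  shows "rl_qop S op (R `` {e}) (rl_qrep S op (R `` {e}) x) (rl_qrep S op (R `` {e}) y)
       = rl_qrep S op (R `` {e}) (op x y)"
proof -
  let ?p = "rl_qrep S op (R `` {e})"
  have "(op (?p x) (?p y), op x y) \<in> R"
    using rl_cong_closed[OF C rl_qrep_props(2)[OF L C x] rl_qrep_props(2)[OF L C y]] .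
  then show ?thesis unfolding rl_qop_def
    using rl_qrep_eq[OF L C] rlD(2)[OF L] rl_qrep_props(1)[OF L C] x y by simp
qed

lemma rl_quot_rl:
  assumes L: "rl_right_loop S op e" and C: "rl_congruence S op e R"
  shows "rl_right_loop (rl_qcarrier S op (R `` {e})) (rl_qop S op (R `` {e})) (rl_qrep S op (R `` {e}) e)"
proof -
  let ?p = "rl_qrep S op (R `` {e})" and ?Q = "rl_qcarrier S op (R `` {e})" and ?o = "rl_qop S op (R `` {e})"
  note cl = rlD(2)[OF L] and eS = rlD(1)[OF L]
  note hom = rl_qop_hom[OF L C]
  have Q: "?Q = ?p ` S" unfolding rl_qcarrier_def ..
  show ?thesis unfolding rl_right_loop_def
  proof (intro conjI ballI)
    show "?p e \<in> ?Q" using Q eS by blast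
  next
    fix a b assume "a \<in> ?Q" "b \<in> ?Q"
    then obtain x y where "x \<in> S" "y \<in> S" "a = ?p x" "b = ?p y" using Q by blast
    then show "?o a b \<in> ?Q" using hom cl Q by auto
  next
    fix a assume "a \<in> ?Q"
    then obtain x where x: "x \<in> S" "a = ?p x" using Q by blast
    show "?o (?p e) a = a" "?o a (?p e) = a" using hom[OF eS x(1)] hom[OF x(1) eS] x rlD(3,4)[OF L] by auto
  next
    fix a b assume "a \<in> ?Q" "b \<in> ?Q"
    then obtain x y where x: "x \<in> S" "a = ?p x" and y: "y \<in> S" "b = ?p y" using Q by blast
    obtain z where z: "z \<in> S" "op z x = y" using rl_div[OF L x(1) y(1)] by blast
    show "\<exists>!w. w \<in> ?Q \<and> ?o w a = b"
    proof (rule ex1I[of _ "?p z"])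
      show "?p z \<in> ?Q \<and> ?o (?p z) a = b" using Q z x y hom by auto
    next
      fix w assume w: "w \<in> ?Q \<and> ?o w a = b"
      then obtain u where u: "u \<in> S" "w = ?p u" using Q by blast
      have "?p (op u x) = ?p (op z x)" using w u hom[OF u(1) x(1)] x y z by simp
      then have "(op u x, op z x) \<in> R" using rl_qrep_eq[OF L C cl[OF u(1) x(1)] cl[OF z(1) x(1)]] by simp
      then have "(u, z) \<in> R"
        using rl_cong_div[OF L C rl_cong_equiv_facts(1)[OF C x(1)] _ u(1) z(1)] by blast
      then show "w = ?p z" using rl_qrep_eq[OF L C u(1) z(1)] u by simp
    qed
  qed
qed

lemma rl_pullback:
  assumes L: "rl_right_loop S op e" and C: "rl_congruence S op e R"
    and C2: "rl_congruence (rl_qcarrier S op (R `` {e})) (rl_qop S op (R `` {e})) (rl_qrep S op (R `` {e}) e) R2"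
  shows "rl_congruence S op e {(x, y). x \<in> S \<and> y \<in> S \<and> (rl_qrep S op (R `` {e}) x, rl_qrep S op (R `` {e}) y) \<in> R2}"
    (is "rl_congruence S op e ?R")
proof -
  let ?p = "rl_qrep S op (R `` {e})" and ?Q = "rl_qcarrier S op (R `` {e})" and ?o = "rl_qop S op (R `` {e})"
  have LQ: "rl_right_loop ?Q ?o (?p e)" using rl_quot_rl[OF L C] .
  note F2 = rl_cong_equiv_facts[OF C2]
  note hom = rl_qop_hom[OF L C]
  note cl = rlD(2)[OF L]
  have pQ: "?p x \<in> ?Q" if "x \<in> S" for x using that unfolding rl_qcarrier_def by blast
  show ?thesis
  proof (rule rl_congruenceI[OF L])
    show "equiv S ?R" unfolding equiv_def refl_on_def sym_def trans_def
      using F2(1)[OF pQ] F2(2) F2(3) by blast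
    show "(e, e) \<in> ?R" using rlD(1)[OF L] F2(1)[OF pQ] by blast
  next
    fix a b c d assume "(a, b) \<in> ?R" "(c, d) \<in> ?R"
    then have H: "a \<in> S" "b \<in> S" "c \<in> S" "d \<in> S" "(?p a, ?p b) \<in> R2" "(?p c, ?p d) \<in> R2" by auto
    have "(?o (?p a) (?p c), ?o (?p b) (?p d)) \<in> R2" using rl_cong_closed[OF C2 H(5,6)] .
    then show "(op a c, op b d) \<in> ?R" using hom H cl by auto
  next
    fix a b c d x y assume "(a, b) \<in> ?R" "(c, d) \<in> ?R" and x: "x \<in> S" and y: "y \<in> S"
      and xa: "op x a = c" and yb: "op y b = d"
    then have H: "a \<in> S" "b \<in> S" "c \<in> S" "d \<in> S" "(?p a, ?p b) \<in> R2" "(?p c, ?p d) \<in> R2" by auto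
    have "?o (?p x) (?p a) = ?p c" "?o (?p y) (?p b) = ?p d" using hom x y H xa yb by auto
    then have "(?p x, ?p y) \<in> R2" using rl_cong_div[OF LQ C2 H(5,6) pQ[OF x] pQ[OF y]] by blast
    then show "(x, y) \<in> ?R" using x y by blast
  qed
qed

lemma rl_id_cong:
  assumes L: "rl_right_loop S op e"
  shows "rl_congruence S op e (Id_on S)"
proof (rule rl_congruenceI[OF L])
  show "equiv S (Id_on S)" by (auto simp: equiv_def refl_on_def sym_def trans_def)
  show "(e, e) \<in> Id_on S" using rlD(1)[OF L] by auto
next
  fix a b c d assume "(a, b) \<in> Id_on S" "(c, d) \<in> Id_on S"
  then show "(op a c, op b d) \<in> Id_on S" using rlD(2)[OF L] by auto
next
  fix a b c d x y assume "(a, b) \<in> Id_on S" "(c, d) \<in> Id_on S" "x \<in> S" "y \<in> S" "op x a = c" "op y b = d"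
  then have "a \<in> S" "b = a" "d = c" by auto
  then have "x = y" using rl_cancel[OF L \<open>x \<in> S\<close> \<open>y \<in> S\<close> \<open>a \<in> S\<close>] \<open>op x a = c\<close> \<open>op y b = d\<close> by simp
  then show "(x, y) \<in> Id_on S" using \<open>y \<in> S\<close> by (simp add: Id_on_iff)
qed

lemma rl_upper_center_inv:
  assumes L: "rl_right_loop S op e"
  shows "\<exists>R. rl_congruence S op e R \<and> rl_upper_center S op e i = R `` {e}"
proof (induction i)
  case 0
  have "Id_on S `` {e} = {e}" using rlD(1)[OF L] by blast
  then show ?case using rl_id_cong[OF L] by (intro exI[of _ "Id_on S"]) simp
next
  case (Suc i)
  then obtain R where C: "rl_congruence S op e R" and Zi: "rl_upper_center S op e i = R `` {e}" by blast
  let ?p = "rl_qrep S op (R `` {e})" and ?Q = "rl_qcarrier S op (R `` {e})" and ?o = "rl_qop S op (R `` {e})"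
  have LQ: "rl_right_loop ?Q ?o (?p e)" using rl_quot_rl[OF L C] .
  let ?R2 = "rl_zeta ?Q ?o (?p e)"
  have C2: "rl_congruence ?Q ?o (?p e) ?R2" using rl_zeta_eq[OF LQ] rl_bZ_cong[OF LQ] by simp
  let ?R = "{(x, y). x \<in> S \<and> y \<in> S \<and> (?p x, ?p y) \<in> ?R2}"
  have "rl_upper_center S op e (Suc i) = {x \<in> S. ?p x \<in> ?R2 `` {?p e}}"
    using Zi by (simp add: rl_center_def Let_def)
  also have "\<dots> = ?R `` {e}" using rlD(1)[OF L] by auto
  finally show ?case using rl_pullback[OF L C C2] by blast
qed

lemma rl_abelian_iff:
  assumes L: "rl_right_loop S op e" and C: "rl_congruence S op e R"
  shows "rl_quotient_abelian S op e (R `` {e}) \<longleftrightarrow>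
    (\<forall>x\<in>S. \<forall>y\<in>S. \<forall>z\<in>S. (op x y, op y x) \<in> R \<and> (op (op x y) z, op x (op y z)) \<in> R)"
proof -
  let ?p = "rl_qrep S op (R `` {e})" and ?Q = "rl_qcarrier S op (R `` {e})" and ?o = "rl_qop S op (R `` {e})"
  let ?G = "\<lparr>carrier = ?Q, mult = ?o, one = ?p e\<rparr>"
  have LQ: "rl_right_loop ?Q ?o (?p e)" using rl_quot_rl[OF L C] .
  note hom = rl_qop_hom[OF L C]
  note cl = rlD(2)[OF L]
  have Q: "?Q = ?p ` S" unfolding rl_qcarrier_def ..
  have pQ: "?p x \<in> ?Q" if "x \<in> S" for x using that Q by blast
  note peq = rl_qrep_eq[OF L C]
  show ?thesis unfolding rl_quotient_abelian_def
  proof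
    assume G: "comm_group ?G"
    interpret G: comm_group ?G by (rule G)
    show "\<forall>x\<in>S. \<forall>y\<in>S. \<forall>z\<in>S. (op x y, op y x) \<in> R \<and> (op (op x y) z, op x (op y z)) \<in> R"
    proof (intro ballI conjI)
      fix x y z assume x: "x \<in> S" and y: "y \<in> S" and z: "z \<in> S"
      have "?o (?p x) (?p y) = ?o (?p y) (?p x)" using G.m_comm[of "?p x" "?p y"] pQ x y by simp
      then have "?p (op x y) = ?p (op y x)" using hom x y by simp
      then show "(op x y, op y x) \<in> R" using peq cl x y by simp
      have "?o (?o (?p x) (?p y)) (?p z) = ?o (?p x) (?o (?p y) (?p z))"
        using G.m_assoc[of "?p x" "?p y" "?p z"] pQ x y z by simp
      then have "?p (op (op x y) z) = ?p (op x (op y z))" using hom x y z cl by simp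
      then show "(op (op x y) z, op x (op y z)) \<in> R" using peq cl x y z by simp
    qed
  next
    assume H: "\<forall>x\<in>S. \<forall>y\<in>S. \<forall>z\<in>S. (op x y, op y x) \<in> R \<and> (op (op x y) z, op x (op y z)) \<in> R"
    show "comm_group ?G"
    proof (rule comm_groupI)
      fix a b assume "a \<in> carrier ?G" "b \<in> carrier ?G"
      then show "a \<otimes>\<^bsub>?G\<^esub> b \<in> carrier ?G" using rlD(2)[OF LQ] by simp
    next
      show "\<one>\<^bsub>?G\<^esub> \<in> carrier ?G" using rlD(1)[OF LQ] by simp
    next
      fix a b c assume "a \<in> carrier ?G" "b \<in> carrier ?G" "c \<in> carrier ?G"
      then obtain x y z where xyz: "x \<in> S" "y \<in> S" "z \<in> S" "a = ?p x" "b = ?p y" "c = ?p z" using Q by auto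
      have "(op (op x y) z, op x (op y z)) \<in> R" using H xyz by blast
      then have "?p (op (op x y) z) = ?p (op x (op y z))" using peq cl xyz by simp
      then show "a \<otimes>\<^bsub>?G\<^esub> b \<otimes>\<^bsub>?G\<^esub> c = a \<otimes>\<^bsub>?G\<^esub> (b \<otimes>\<^bsub>?G\<^esub> c)"
        using hom xyz cl by simp
    next
      fix a b assume "a \<in> carrier ?G" "b \<in> carrier ?G"
      then obtain x y where xy: "x \<in> S" "y \<in> S" "a = ?p x" "b = ?p y" using Q by auto
      have "(op x y, op y x) \<in> R" using H xy by blast
      then have "?p (op x y) = ?p (op y x)" using peq cl xy by simp
      then show "a \<otimes>\<^bsub>?G\<^esub> b = b \<otimes>\<^bsub>?G\<^esub> a" using hom xy by simp
    next
      fix a assume "a \<in> carrier ?G"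
      then show "\<one>\<^bsub>?G\<^esub> \<otimes>\<^bsub>?G\<^esub> a = a" using rlD(3)[OF LQ] by simp
    next
      fix a assume "a \<in> carrier ?G"
      then have a: "a \<in> ?Q" by simp
      obtain b where "b \<in> ?Q" "?o b a = ?p e" using rl_div[OF LQ a rlD(1)[OF LQ]] by blast
      then show "\<exists>b\<in>carrier ?G. b \<otimes>\<^bsub>?G\<^esub> a = \<one>\<^bsub>?G\<^esub>" by auto
    qed
  qed
qed

lemma rl_class_rl:
  assumes L: "rl_right_loop S op e" and C: "rl_congruence S op e R"
  shows "rl_right_loop (R `` {e}) op e" "R `` {e} \<subseteq> S"
proof -
  note F = rl_cong_equiv_facts[OF C]
  have eS: "e \<in> S" using rlD(1)[OF L] .
  show sub: "R `` {e} \<subseteq> S"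
  proof
    fix x assume "x \<in> R `` {e}" then have "(e, x) \<in> R" by simp
    then show "x \<in> S" by (rule F(5))
  qed
  show "rl_right_loop (R `` {e}) op e" unfolding rl_right_loop_def
  proof (intro conjI ballI)
    show "e \<in> R `` {e}" using F(1)[OF eS] by simp
  next
    fix x y assume "x \<in> R `` {e}" "y \<in> R `` {e}"
    then have "(op e e, op x y) \<in> R" using rl_cong_closed[OF C] by simp
    then show "op x y \<in> R `` {e}" using rlD(3)[OF L eS] by simp
  next
    fix x assume "x \<in> R `` {e}"
    then have "x \<in> S" using sub by blast
    then show "op e x = x" "op x e = x" using rlD(3,4)[OF L] by auto
  next
    fix a b assume a: "a \<in> R `` {e}" and b: "b \<in> R `` {e}"
    have aS: "a \<in> S" and bS: "b \<in> S" using a b sub by auto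
    obtain x where x: "x \<in> S" "op x a = b" using rl_div[OF L aS bS] by blast
    have "(e, x) \<in> R" using rl_cong_div[OF L C _ _ eS x(1)] a b x(2) rlD(3)[OF L eS] by simp
    show "\<exists>!x. x \<in> R `` {e} \<and> op x a = b"
    proof (rule ex1I[of _ x])
      show "x \<in> R `` {e} \<and> op x a = b" using \<open>(e, x) \<in> R\<close> x by simp
      fix y assume "y \<in> R `` {e} \<and> op y a = b"
      then have "y \<in> S" "op y a = op x a" using sub x(2) by auto
      then show "y = x" using rl_cancel[OF L _ x(1) aS] by simp
    qed
  qed
qed

lemma rl_derived_props:
  assumes L: "rl_right_loop S op e"
  shows "rl_invariant S op e (rl_derived S op e)" "rl_quotient_abelian S op e (rl_derived S op e)"
    "\<And>N. rl_invariant S op e N \<Longrightarrow> rl_quotient_abelian S op e N \<Longrightarrow> rl_derived S op e \<subseteq> N"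
proof -
  note cl = rlD(2)[OF L]
  define P where "P R \<longleftrightarrow> rl_congruence S op e R \<and> rl_quotient_abelian S op e (R `` {e})" for R
  define R0 where "R0 = {(x, y). x \<in> S \<and> y \<in> S \<and> (\<forall>R. P R \<longrightarrow> (x, y) \<in> R)}"
  have C0: "rl_congruence S op e R0"
  proof (rule rl_congruenceI[OF L])
    have rf: "(x, x) \<in> R0" if x: "x \<in> S" for x
    proof -
      have "(x, x) \<in> R" if "P R" for R using rl_cong_equiv_facts(1)[of S op e R x] that x unfolding P_def by blast
      then show ?thesis using x unfolding R0_def by blast
    qed
    have sy: "(y, x) \<in> R0" if xy: "(x, y) \<in> R0" for x y
    proof -
      have "(y, x) \<in> R" if "P R" for R using rl_cong_equiv_facts(2)[of S op e R x y] that xy unfolding P_def R0_def by blast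
      then show ?thesis using xy unfolding R0_def by blast
    qed
    have tr: "(x, z) \<in> R0" if xy: "(x, y) \<in> R0" and yz: "(y, z) \<in> R0" for x y z
    proof -
      have "(x, z) \<in> R" if "P R" for R using rl_cong_equiv_facts(3)[of S op e R x y z] that xy yz unfolding P_def R0_def by blast
      then show ?thesis using xy yz unfolding R0_def by blast
    qed
    have sub: "R0 \<subseteq> S \<times> S" unfolding R0_def by blast
    show "equiv S R0" unfolding equiv_def refl_on_def sym_def trans_def using rf sy tr sub by blast
    show "(e, e) \<in> R0" using rf rlD(1)[OF L] by blast
  next
    fix a b c d assume ab: "(a, b) \<in> R0" and cd: "(c, d) \<in> R0"
    have "(op a c, op b d) \<in> R" if "P R" for R
      using rl_cong_closed[of S op e R a b c d] that ab cd unfolding P_def R0_def by blast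
    moreover have "op a c \<in> S" "op b d \<in> S" using ab cd cl unfolding R0_def by auto
    ultimately show "(op a c, op b d) \<in> R0" unfolding R0_def by blast
  next
    fix a b c d x y assume ab: "(a, b) \<in> R0" and cd: "(c, d) \<in> R0" and xy: "x \<in> S" "y \<in> S"
      and eqs: "op x a = c" "op y b = d"
    have "(x, y) \<in> R" if "P R" for R
      using rl_cong_div[OF L, of R a b c d x y] that ab cd xy eqs unfolding P_def R0_def by blast
    then show "(x, y) \<in> R0" using xy unfolding R0_def by blast
  qed
  have elem: "\<forall>x\<in>S. \<forall>y\<in>S. \<forall>z\<in>S. (op x y, op y x) \<in> R0 \<and> (op (op x y) z, op x (op y z)) \<in> R0"
  proof (intro ballI conjI)
    fix x y z assume x: "x \<in> S" and y: "y \<in> S" and z: "z \<in> S"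
    have "(op x y, op y x) \<in> R \<and> (op (op x y) z, op x (op y z)) \<in> R" if "P R" for R
      using rl_abelian_iff[OF L, of R] that x y z unfolding P_def by blast
    then show "(op x y, op y x) \<in> R0" "(op (op x y) z, op x (op y z)) \<in> R0"
      unfolding R0_def using x y z cl by auto
  qed
  have ab0: "rl_quotient_abelian S op e (R0 `` {e})" using rl_abelian_iff[OF L C0] elem by blast
  have inv0: "rl_invariant S op e (R0 `` {e})" using C0 unfolding rl_invariant_def by blast
  have min0: "R0 `` {e} \<subseteq> N" if H: "rl_invariant S op e N" "rl_quotient_abelian S op e N" for N
  proof -
    obtain R where R: "rl_congruence S op e R" "N = R `` {e}" using H(1) unfolding rl_invariant_def by blast
    have "P R" using R H(2) unfolding P_def by simp
    then show ?thesis using R(2) unfolding R0_def by blast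
  qed
  have eq: "rl_derived S op e = R0 `` {e}"
    unfolding rl_derived_def
  proof (rule the_equality)
    show "rl_invariant S op e (R0 `` {e}) \<and> rl_quotient_abelian S op e (R0 `` {e}) \<and>
      (\<forall>N'. rl_invariant S op e N' \<and> rl_quotient_abelian S op e N' \<longrightarrow> R0 `` {e} \<subseteq> N')"
      using inv0 ab0 min0 by blast
    fix N assume "rl_invariant S op e N \<and> rl_quotient_abelian S op e N \<and>
      (\<forall>N'. rl_invariant S op e N' \<and> rl_quotient_abelian S op e N' \<longrightarrow> N \<subseteq> N')"
    then show "N = R0 `` {e}" using inv0 ab0 min0 by blast
  qed
  show "rl_invariant S op e (rl_derived S op e)" using inv0 eq by simp
  show "rl_quotient_abelian S op e (rl_derived S op e)" using ab0 eq by simp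
  show "\<And>N. rl_invariant S op e N \<Longrightarrow> rl_quotient_abelian S op e N \<Longrightarrow> rl_derived S op e \<subseteq> N"
    using min0 eq by simp
qed

lemma rl_derived_step:
  assumes L: "rl_right_loop S op e" and LA: "rl_right_loop A op e" and AS: "A \<subseteq> S"
    and Am: "A \<subseteq> rl_upper_center S op e (Suc m)"
  shows "rl_right_loop (rl_derived A op e) op e \<and> rl_derived A op e \<subseteq> A \<and>
         rl_derived A op e \<subseteq> rl_upper_center S op e m"
proof -
  obtain R where C: "rl_congruence S op e R" and Zm: "rl_upper_center S op e m = R `` {e}"
    using rl_upper_center_inv[OF L] by blast
  let ?p = "rl_qrep S op (R `` {e})" and ?Q = "rl_qcarrier S op (R `` {e})" and ?o = "rl_qop S op (R `` {e})"
  have LQ: "rl_right_loop ?Q ?o (?p e)" using rl_quot_rl[OF L C] .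
  have Zs: "rl_upper_center S op e (Suc m) = {x \<in> S. ?p x \<in> rl_Z ?Q ?o}"
    using Zm rl_center_eq[OF LQ] by (simp add: Let_def)
  note hom = rl_qop_hom[OF L C]
  note peq = rl_qrep_eq[OF L C]
  note cl = rlD(2)[OF L]
  note clA = rlD(2)[OF LA]
  note F = rl_cong_equiv_facts[OF C]
  have pQ: "?p x \<in> ?Q" if "x \<in> S" for x using that unfolding rl_qcarrier_def by blast
  have eA: "e \<in> A" using rlD(1)[OF LA] .
  define R' where "R' = R \<inter> (A \<times> A)"
  have C': "rl_congruence A op e R'"
  proof (rule rl_congruenceI[OF LA])
    have rf: "(x, x) \<in> R'" if x: "x \<in> A" for x
    proof -
      have "x \<in> S" using x AS by blast
      then show ?thesis using F(1) x unfolding R'_def by blast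
    qed
    have sy: "(y, x) \<in> R'" if xy: "(x, y) \<in> R'" for x y
      using F(2)[of x y] xy unfolding R'_def by blast
    have tr: "(x, z) \<in> R'" if xy: "(x, y) \<in> R'" and yz: "(y, z) \<in> R'" for x y z
      using F(3)[of x y z] xy yz unfolding R'_def by blast
    have sub: "R' \<subseteq> A \<times> A" unfolding R'_def by blast
    show "equiv A R'" unfolding equiv_def refl_on_def sym_def trans_def using rf sy tr sub by blast
    show "(e, e) \<in> R'" using rf eA by blast
  next
    fix a b c d assume H: "(a, b) \<in> R'" "(c, d) \<in> R'"
    then have "(op a c, op b d) \<in> R" using rl_cong_closed[OF C, of a b c d] unfolding R'_def by blast
    moreover have "op a c \<in> A" "op b d \<in> A" using H clA unfolding R'_def by auto
    ultimately show "(op a c, op b d) \<in> R'" unfolding R'_def by blast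
  next
    fix a b c d x y assume H: "(a, b) \<in> R'" "(c, d) \<in> R'" "x \<in> A" "y \<in> A" "op x a = c" "op y b = d"
    then have "(x, y) \<in> R" using rl_cong_div[OF L C, of a b c d x y] AS unfolding R'_def by blast
    then show "(x, y) \<in> R'" using H unfolding R'_def by blast
  qed
  have cls: "R' `` {e} = A \<inter> R `` {e}" unfolding R'_def using eA by blast
  have elem: "\<forall>x\<in>A. \<forall>y\<in>A. \<forall>z\<in>A. (op x y, op y x) \<in> R' \<and> (op (op x y) z, op x (op y z)) \<in> R'"
  proof (intro ballI conjI)
    fix x y z assume x: "x \<in> A" and y: "y \<in> A" and z: "z \<in> A"
    have xS: "x \<in> S" and yS: "y \<in> S" and zS: "z \<in> S" using x y z AS by auto
    have xZ: "?p x \<in> rl_Z ?Q ?o" using Am x Zs by blast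
    have "?o (?p x) (?p y) = ?o (?p y) (?p x)" using rl_ZD(2)[OF xZ pQ[OF yS] pQ[OF yS]] .
    then have "?p (op x y) = ?p (op y x)" using hom xS yS by simp
    then have "(op x y, op y x) \<in> R" using peq cl xS yS by simp
    then show "(op x y, op y x) \<in> R'" unfolding R'_def using clA x y by blast
    have "?o (?o (?p x) (?p y)) (?p z) = ?o (?p x) (?o (?p y) (?p z))"
      using rl_ZD(3)[OF xZ pQ[OF yS] pQ[OF zS]] .
    then have "?p (op (op x y) z) = ?p (op x (op y z))" using hom xS yS zS cl by simp
    then have "(op (op x y) z, op x (op y z)) \<in> R" using peq cl xS yS zS by simp
    then show "(op (op x y) z, op x (op y z)) \<in> R'" unfolding R'_def using clA x y z by blast
  qed
  have ab: "rl_quotient_abelian A op e (R' `` {e})" using rl_abelian_iff[OF LA C'] elem by blast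
  have inv: "rl_invariant A op e (R' `` {e})" using C' unfolding rl_invariant_def by blast
  have D: "rl_derived A op e \<subseteq> A \<inter> R `` {e}" using rl_derived_props(3)[OF LA inv ab] cls by simp
  obtain RD where RD: "rl_congruence A op e RD" "rl_derived A op e = RD `` {e}"
    using rl_derived_props(1)[OF LA] unfolding rl_invariant_def by blast
  have "rl_right_loop (rl_derived A op e) op e" using rl_class_rl(1)[OF LA RD(1)] RD(2) by simp
  then show ?thesis using D Zm by blast
qed

theorem mainTheorem11:
  fixes S :: "'a set" and op :: "'a \<Rightarrow> 'a \<Rightarrow> 'a" and e :: 'a
  assumes "rl_right_loop S op e"
    and "rl_nilpotent S op e"
  shows "rl_solvable S op e"
proof -
  note L = assms(1)
  obtain n where n: "rl_upper_center S op e n = S" using assms(2) unfolding rl_nilpotent_def by blast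
  have main: "rl_right_loop (rl_derived_series S op e k) op e \<and> rl_derived_series S op e k \<subseteq> S \<and>
      rl_derived_series S op e k \<subseteq> rl_upper_center S op e (n - k)" if "k \<le> n" for k
    using that
  proof (induction k)
    case 0
    have "rl_derived_series S op e 0 = S" by simp
    then show ?case using L n by (simp del: rl_upper_center.simps)
  next
    case (Suc k)
    have nk: "n - k = Suc (n - Suc k)" using Suc.prems by simp
    have "k \<le> n" using Suc.prems by simp
    then have IH: "rl_right_loop (rl_derived_series S op e k) op e" "rl_derived_series S op e k \<subseteq> S"
      "rl_derived_series S op e k \<subseteq> rl_upper_center S op e (Suc (n - Suc k))"
      using Suc.IH nk by (simp_all del: rl_upper_center.simps)
    have eq: "rl_derived_series S op e (Suc k) = rl_derived (rl_derived_series S op e k) op e" by simp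
    have st: "rl_right_loop (rl_derived (rl_derived_series S op e k) op e) op e \<and>
      rl_derived (rl_derived_series S op e k) op e \<subseteq> rl_derived_series S op e k \<and>
      rl_derived (rl_derived_series S op e k) op e \<subseteq> rl_upper_center S op e (n - Suc k)"
      using rl_derived_step[OF L IH] .
    show ?case unfolding eq using st IH(2) by blast
  qed
  have m: "rl_right_loop (rl_derived_series S op e n) op e \<and>
      rl_derived_series S op e n \<subseteq> rl_upper_center S op e (n - n)" using main[OF order_refl] by blast
  then have m2: "rl_derived_series S op e n \<subseteq> {e}" by (simp only: diff_self_eq_0 rl_upper_center.simps(1))
  have "e \<in> rl_derived_series S op e n" using rlD(1)[of "rl_derived_series S op e n" op e] m by blast
  then have "rl_derived_series S op e n = {e}" using m2 by blast
  then show ?thesis unfolding rl_solvable_def by blast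
qed

end
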